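(* Let $X$ be a set with $|X|\ge3$. Then every grading of the symmetric inverse monoid $\mathcal I(X)$ by any group is trivial.
   Context: $\mathcal I(X)$ consists of all bijections $\phi:A\to B$ with $A,B\subseteq X$, composed as partial maps (the composite $\phi\psi$ is restricted to $\psi^{-1}(\mathrm{Im}\,\psi\cap\mathrm{Dom}\,\phi)$), with the empty map as zero. A $\Gamma$-grading of a semigroup $S$ with zero is a map $\deg:S\setminus\{0\}\to\Gamma$ with $\deg(st)=\deg(s)\deg(t)$ whenever $st\neq0$; it is trivial if every nonzero element has degree equal to the identity $\varepsilon$ of $\Gamma$. *)

theory Defs
  imports "HOL-Algebra.Group"
begin

(* The product phi psi (apply psi first) is map composition
  phi o_m psi; the zero is the empty map *)
definition sym_inv_monoid :: "'a set \<Rightarrow> ('a \<rightharpoonup> 'a) set" where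
  "sym_inv_monoid X = {f. dom f \<subseteq> X \<and> ran f \<subseteq> X \<and> inj_on f (dom f)}"

definition sym_inv_grading :: "'a set \<Rightarrow> ('b, 'c) monoid_scheme \<Rightarrow> (('a \<rightharpoonup> 'a) \<Rightarrow> 'b) \<Rightarrow> bool" where
  "sym_inv_grading X G deg \<longleftrightarrow>
     (\<forall>s \<in> sym_inv_monoid X - {Map.empty}. deg s \<in> carrier G) \<and>
     (\<forall>s \<in> sym_inv_monoid X - {Map.empty}. \<forall>t \<in> sym_inv_monoid X - {Map.empty}.
        s \<circ>\<^sub>m t \<noteq> Map.empty \<longrightarrow> deg (s \<circ>\<^sub>m t) = deg s \<otimes>\<^bsub>G\<^esub> deg t)"

end

theory Submission
  imports Defs
begin

lemma sing_in: "x \<in> X \<Longrightarrow> [x \<mapsto> y] \<in> sym_inv_monoid X - {Map.empty}" if "y \<in> X"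
  using that by (auto simp: sym_inv_monoid_def ran_def)

lemma comp_sing: "s x = Some y \<Longrightarrow> s \<circ>\<^sub>m [x \<mapsto> x] = [x \<mapsto> y]"
  by (rule ext) (auto simp: map_comp_def)

theorem proposition5p1:
  fixes X :: "'a set" and G :: "('b, 'c) monoid_scheme" and deg :: "('a \<rightharpoonup> 'a) \<Rightarrow> 'b"
  assumes "\<exists>a b c. a \<in> X \<and> b \<in> X \<and> c \<in> X \<and> a \<noteq> b \<and> a \<noteq> c \<and> b \<noteq> c"
    and "group G"
    and "sym_inv_grading X G deg"
  shows "\<forall>s \<in> sym_inv_monoid X - {Map.empty}. deg s = \<one>\<^bsub>G\<^esub>"
proof
  interpret group G by fact
  have car: "\<And>s. s \<in> sym_inv_monoid X - {Map.empty} \<Longrightarrow> deg s \<in> carrier G"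
    and mul: "\<And>s t. s \<in> sym_inv_monoid X - {Map.empty} \<Longrightarrow> t \<in> sym_inv_monoid X - {Map.empty}
       \<Longrightarrow> s \<circ>\<^sub>m t \<noteq> Map.empty \<Longrightarrow> deg (s \<circ>\<^sub>m t) = deg s \<otimes>\<^bsub>G\<^esub> deg t"
    using assms(3) unfolding sym_inv_grading_def by auto
  have fix1: "deg t = \<one>\<^bsub>G\<^esub>" if t: "t \<in> sym_inv_monoid X - {Map.empty}" and "t z = Some z" "z \<in> X" for t z
  proof -
    have e: "[z \<mapsto> z] \<in> sym_inv_monoid X - {Map.empty}" using sing_in[OF \<open>z \<in> X\<close> \<open>z \<in> X\<close>] .
    have "deg [z \<mapsto> z] = deg t \<otimes>\<^bsub>G\<^esub> deg [z \<mapsto> z]"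
      using mul[OF t e] comp_sing[of t z z, OF \<open>t z = Some z\<close>] by simp
    then show ?thesis using car[OF t] car[OF e] by simp
  qed
  fix s assume s: "s \<in> sym_inv_monoid X - {Map.empty}"
  then obtain x y where sx: "s x = Some y" by (auto simp: fun_eq_iff)
  have xX: "x \<in> X" and yX: "y \<in> X" using s sx by (auto simp: sym_inv_monoid_def dom_def ran_def)
  show "deg s = \<one>\<^bsub>G\<^esub>"
  proof (cases "x = y")
    case True then show ?thesis using fix1 s sx xX by blast
  next
    case False
    obtain c where c: "c \<in> X" "c \<noteq> x" "c \<noteq> y" using assms(1) by blast
    define \<tau> where "\<tau> = [x \<mapsto> y, c \<mapsto> c]"
    have tau: "\<tau> \<in> sym_inv_monoid X - {Map.empty}"
      using c xX yX False unfolding \<tau>_def sym_inv_monoid_def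
      by (auto simp: ran_def inj_on_def split: if_splits)
    have t1: "deg \<tau> = \<one>\<^bsub>G\<^esub>" using fix1[OF tau, of c] c unfolding \<tau>_def by simp
    have e: "[x \<mapsto> x] \<in> sym_inv_monoid X - {Map.empty}" using sing_in[OF xX xX] .
    have tx: "\<tau> x = Some y" using c unfolding \<tau>_def by simp
    have "deg s \<otimes>\<^bsub>G\<^esub> deg [x \<mapsto> x] = deg \<tau> \<otimes>\<^bsub>G\<^esub> deg [x \<mapsto> x]"
      using mul[OF s e] mul[OF tau e] comp_sing[of s x y, OF sx] comp_sing[of \<tau> x y, OF tx] by simp
    then show ?thesis using t1 car[OF s] car[OF e] by simp
  qed
qed

end
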